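(* Let $P$ be a non-centered convex polyomino, let $c_1$ be its leftmost column, let $Y$ be the row of $P$ containing the bottom cell of $c_1$, and let $T$ be the column of $P$ containing the rightmost cell of $Y$. Then the set $\theta$ of cells of $P$ lying in columns strictly to the right of $T$ is non-empty.
   Context: A cell is a unit square of $\mathbb Z\times\mathbb Z$; a polyomino is a finite connected union of cells with no cut point. A polyomino is convex if its intersection with every vertical and every horizontal line of cells is connected. The minimal bounding rectangle of a convex polyomino is the smallest lattice rectangle containing it; a convex polyomino is centered if at least one of its rows touches both the left and the right side of its minimal bounding rectangle. *)

theory Defs
  imports Main
begin

text \<open>A cell is identified with the integer coordinates (column, row) of its lower-left
corner: the cell (x,y) is the unit square [x,x+1] x [y,y+1].\<close>
type_synonym cell = "int \<times> int"

definition edge_adj :: "cell \<Rightarrow> cell \<Rightarrow> bool" where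
  "edge_adj c d \<longleftrightarrow> \<bar>fst c - fst d\<bar> + \<bar>snd c - snd d\<bar> = 1"

text \<open>A polyomino: a finite nonempty set of cells whose union is connected without cut
point, i.e. the cells are connected through shared edges.\<close>
definition polyomino :: "cell set \<Rightarrow> bool" where
  "polyomino P \<longleftrightarrow> finite P \<and> P \<noteq> {} \<and>
     (\<forall>c\<in>P. \<forall>d\<in>P. (\<lambda>u v. u \<in> P \<and> v \<in> P \<and> edge_adj u v)\<^sup>*\<^sup>* c d)"

definition row_of :: "cell set \<Rightarrow> int \<Rightarrow> cell set" where
  "row_of P y = {c \<in> P. snd c = y}"

definition col_of :: "cell set \<Rightarrow> int \<Rightarrow> cell set" where
  "col_of P x = {c \<in> P. fst c = x}"

definition convex_polyomino :: "cell set \<Rightarrow> bool" where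
  "convex_polyomino P \<longleftrightarrow> polyomino P \<and>
     (\<forall>y x1 x2 x. (x1, y) \<in> P \<longrightarrow> (x2, y) \<in> P \<longrightarrow> x1 \<le> x \<longrightarrow> x \<le> x2 \<longrightarrow> (x, y) \<in> P) \<and>
     (\<forall>x y1 y2 y. (x, y1) \<in> P \<longrightarrow> (x, y2) \<in> P \<longrightarrow> y1 \<le> y \<longrightarrow> y \<le> y2 \<longrightarrow> (x, y) \<in> P)"

definition min_col :: "cell set \<Rightarrow> int" where
  "min_col P = Min (fst ` P)"

definition max_col :: "cell set \<Rightarrow> int" where
  "max_col P = Max (fst ` P)"

definition centered :: "cell set \<Rightarrow> bool" where
  "centered P \<longleftrightarrow> (\<exists>y. (min_col P, y) \<in> row_of P y \<and> (max_col P, y) \<in> row_of P y)"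

end

theory Submission
  imports Defs
begin

theorem mainTheorem4:
  fixes P :: "cell set" and x1 yY xT :: int
  assumes "convex_polyomino P"
    and "\<not> centered P"
    and "x1 = min_col P"
    and "yY = Min (snd ` col_of P x1)"
    and "xT = Max (fst ` row_of P yY)"
  shows "{c \<in> P. fst c > xT} \<noteq> {}"
proof
  assume E: "{c \<in> P. fst c > xT} = {}"
  have fin: "finite P" and ne: "P \<noteq> {}" using assms(1)
    by (auto simp: convex_polyomino_def polyomino_def)
  have "x1 \<in> fst ` P" using fin ne assms(3) by (simp add: min_col_def)
  then have cne: "col_of P x1 \<noteq> {}" by (force simp: col_of_def)
  have cfin: "finite (col_of P x1)" using fin by (simp add: col_of_def)
  have "yY \<in> snd ` col_of P x1" using assms(4) cne cfin by simp
  then have p1: "(x1, yY) \<in> P" by (force simp: col_of_def)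
  then have rne: "row_of P yY \<noteq> {}" by (force simp: row_of_def)
  have rfin: "finite (row_of P yY)" using fin by (simp add: row_of_def)
  have "xT \<in> fst ` row_of P yY" using assms(5) rne rfin by simp
  then have p2: "(xT, yY) \<in> P" by (force simp: row_of_def)
  have "max_col P \<in> fst ` P" using fin ne by (simp add: max_col_def)
  then obtain c where c: "c \<in> P" "fst c = max_col P" by auto
  have le1: "max_col P \<le> xT" using E c by (metis (mono_tags, lifting) empty_iff mem_Collect_eq not_le)
  have le2: "xT \<le> max_col P" using p2 fin unfolding max_col_def
    by (metis Max_ge finite_imageI fst_conv image_eqI)
  have "centered P" unfolding centered_def row_of_def
    using p1 p2 le1 le2 assms(3) by (rule_tac x=yY in exI) auto
  then show False using assms(2) by simp
qed

end
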